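(* Let $(\eta,F)$ be any generalised entropy. Then: (a) for any jointly distributed random variables $X$ (with values in a finite set) and $Y$ (discrete), $H(X)-H(X\mid Y)\geq 0$; (b) (data processing inequality) for any discrete random variables $X,Y,Z$ such that $Z$ is conditionally independent of $X$ given $Y$, we have $H(X\mid Z)\geq H(X\mid Y)$.
   Context: Generalised entropy: a pair $(\eta,F)$ where $F$ is a bounded real-valued function defined on probability vectors of every finite length, which is symmetric (unchanged by permuting entries) and expansible (unchanged by appending zero entries), and $\eta$ is a real function of a real variable, such that either (a) $\eta$ is increasing and $F$ is concave, or (b) $\eta$ is decreasing and $F$ is convex. The entropies are $H(X)=\eta(F(p_X))$ and $H(X\mid Y)=\eta\big(\sum_{y:\,p(y)>0}p(y)F(p_{X\mid y})\big)$, where $p_{X\mid y}=(p(x\mid y))_x$ is the posterior distribution of $X$ given $Y=y$ (and similarly for $Z$). *)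

theory Defs
  imports "HOL-Probability.Probability_Mass_Function" "HOL-Analysis.Infinite_Sum"
begin

definition prob_vec :: "real list \<Rightarrow> bool" where
  "prob_vec p \<longleftrightarrow> (\<forall>a\<in>set p. 0 \<le> a) \<and> sum_list p = 1"

definition mix_vec :: "real \<Rightarrow> real list \<Rightarrow> real list \<Rightarrow> real list" where
  "mix_vec t p q = map2 (\<lambda>a b. t * a + (1 - t) * b) p q"

definition concave_F :: "(real list \<Rightarrow> real) \<Rightarrow> bool" where
  "concave_F F \<longleftrightarrow> (\<forall>p q t. prob_vec p \<longrightarrow> prob_vec q \<longrightarrow> length p = length q
      \<longrightarrow> 0 \<le> t \<longrightarrow> t \<le> 1 \<longrightarrow> F (mix_vec t p q) \<ge> t * F p + (1 - t) * F q)"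

definition convex_F :: "(real list \<Rightarrow> real) \<Rightarrow> bool" where
  "convex_F F \<longleftrightarrow> (\<forall>p q t. prob_vec p \<longrightarrow> prob_vec q \<longrightarrow> length p = length q
      \<longrightarrow> 0 \<le> t \<longrightarrow> t \<le> 1 \<longrightarrow> F (mix_vec t p q) \<le> t * F p + (1 - t) * F q)"

definition gen_entropy :: "(real \<Rightarrow> real) \<Rightarrow> (real list \<Rightarrow> real) \<Rightarrow> bool" where
  "gen_entropy \<eta> F \<longleftrightarrow>
     (\<exists>B. \<forall>p. prob_vec p \<longrightarrow> \<bar>F p\<bar> \<le> B) \<and>
     (\<forall>p q. prob_vec p \<longrightarrow> mset p = mset q \<longrightarrow> F q = F p) \<and>
     (\<forall>p. prob_vec p \<longrightarrow> F (p @ [0]) = F p) \<and>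
     ((mono \<eta> \<and> concave_F F) \<or> (antimono \<eta> \<and> convex_F F))"

text \<open>A fixed enumeration (without repetition) of a finite set; by symmetry of F
  the choice does not matter.\<close>
definition enum_of :: "'a set \<Rightarrow> 'a list" where
  "enum_of A = (SOME xs. distinct xs \<and> set xs = A)"

definition Pr :: "'w pmf \<Rightarrow> 'w set \<Rightarrow> real" where
  "Pr \<mu> A = measure_pmf.prob \<mu> A"

definition distr_vec :: "'w pmf \<Rightarrow> ('w \<Rightarrow> 'x) \<Rightarrow> real list" where
  "distr_vec \<mu> X = map (\<lambda>x. Pr \<mu> (X -` {x})) (enum_of (range X))"

definition post_vec :: "'w pmf \<Rightarrow> ('w \<Rightarrow> 'x) \<Rightarrow> ('w \<Rightarrow> 'y) \<Rightarrow> 'y \<Rightarrow> real list" where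
  "post_vec \<mu> X Y y =
     map (\<lambda>x. Pr \<mu> (X -` {x} \<inter> Y -` {y}) / Pr \<mu> (Y -` {y})) (enum_of (range X))"

definition gH :: "(real \<Rightarrow> real) \<Rightarrow> (real list \<Rightarrow> real) \<Rightarrow> 'w pmf \<Rightarrow> ('w \<Rightarrow> 'x) \<Rightarrow> real" where
  "gH \<eta> F \<mu> X = \<eta> (F (distr_vec \<mu> X))"

definition gHc :: "(real \<Rightarrow> real) \<Rightarrow> (real list \<Rightarrow> real) \<Rightarrow> 'w pmf \<Rightarrow> ('w \<Rightarrow> 'x) \<Rightarrow> ('w \<Rightarrow> 'y) \<Rightarrow> real" where
  "gHc \<eta> F \<mu> X Y =
     \<eta> (\<Sum>\<^sub>\<infinity>y\<in>{y. Pr \<mu> (Y -` {y}) > 0}. Pr \<mu> (Y -` {y}) * F (post_vec \<mu> X Y y))"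

definition cond_indep :: "'w pmf \<Rightarrow> ('w \<Rightarrow> 'x) \<Rightarrow> ('w \<Rightarrow> 'y) \<Rightarrow> ('w \<Rightarrow> 'z) \<Rightarrow> bool" where
  "cond_indep \<mu> X Y Z \<longleftrightarrow> (\<forall>x y z.
     Pr \<mu> (X -` {x} \<inter> Y -` {y} \<inter> Z -` {z}) * Pr \<mu> (Y -` {y}) =
     Pr \<mu> (X -` {x} \<inter> Y -` {y}) * Pr \<mu> (Y -` {y} \<inter> Z -` {z}))"

end

theory Submission
  imports Defs
begin


lemma map2_map_same: "map2 h (map f xs) (map g xs) = map (\<lambda>x. h (f x) (g x)) xs"
  by (induction xs) auto

lemma has_sum_sum_fin:
  fixes f :: "'i \<Rightarrow> 'j \<Rightarrow> real"
  assumes "finite T" "\<And>j. j \<in> T \<Longrightarrow> ((\<lambda>i. f i j) has_sum s j) I"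
  shows "((\<lambda>i. \<Sum>j\<in>T. f i j) has_sum (\<Sum>j\<in>T. s j)) I"
  using assms
proof (induction T rule: finite_induct)
  case (insert j T)
  have "((\<lambda>i. f i j + (\<Sum>j\<in>T. f i j)) has_sum (s j + (\<Sum>j\<in>T. s j))) I"
    by (rule has_sum_add[of "\<lambda>i. f i j" _ _ "\<lambda>i. \<Sum>j\<in>T. f i j"]) (use insert in auto)
  thus ?case using insert by simp
qed simp

locale jens =
  fixes F :: "real list \<Rightarrow> real" and xs :: "'x list" and B :: real
  assumes dist: "distinct xs" and conc: "concave_F F"
    and bnd: "\<And>p. prob_vec p \<Longrightarrow> \<bar>F p\<bar> \<le> B"
begin

definition pv :: "('x \<Rightarrow> real) \<Rightarrow> bool" where
  "pv f \<longleftrightarrow> (\<forall>x\<in>set xs. 0 \<le> f x) \<and> (\<Sum>x\<in>set xs. f x) = 1"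

definition G :: "('x \<Rightarrow> real) \<Rightarrow> real" where
  "G f = F (map f xs)"

lemma prob_vec_map: "prob_vec (map f xs) \<longleftrightarrow> pv f"
  unfolding prob_vec_def pv_def using dist
  by (simp add: sum_list_distinct_conv_sum_set)

lemma G_cong: "(\<And>x. x \<in> set xs \<Longrightarrow> f x = g x) \<Longrightarrow> G f = G g"
  unfolding G_def by (metis map_eq_conv)

lemma bound_G: "pv f \<Longrightarrow> \<bar>G f\<bar> \<le> B"
  unfolding G_def using bnd prob_vec_map by blast

lemma concave_G:
  assumes "pv f" "pv g" "0 \<le> t" "t \<le> 1"
  shows "t * G f + (1 - t) * G g \<le> G (\<lambda>x. t * f x + (1 - t) * g x)"
proof -
  have "t * F (map f xs) + (1 - t) * F (map g xs) \<le> F (mix_vec t (map f xs) (map g xs))"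
    using conc assms prob_vec_map unfolding concave_F_def by simp
  thus ?thesis unfolding G_def mix_vec_def map2_map_same .
qed

lemma pv_comb:
  assumes "finite S" "\<And>i. i \<in> S \<Longrightarrow> 0 \<le> w i" "sum w S = 1" "\<And>i. i \<in> S \<Longrightarrow> pv (q i)"
  shows "pv (\<lambda>x. \<Sum>i\<in>S. w i * q i x)"
proof -
  have "(\<Sum>x\<in>set xs. \<Sum>i\<in>S. w i * q i x) = (\<Sum>i\<in>S. w i * (\<Sum>x\<in>set xs. q i x))"
    by (subst sum.swap) (simp add: sum_distrib_left)
  also have "\<dots> = (\<Sum>i\<in>S. w i)" using assms(4) unfolding pv_def by simp
  finally show ?thesis using assms unfolding pv_def
    by (auto intro!: sum_nonneg mult_nonneg_nonneg)
qed

lemma jensen_fin: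
  assumes "finite S" "S \<noteq> {}"
  shows "(\<forall>i\<in>S. 0 \<le> w i) \<Longrightarrow> sum w S = 1 \<Longrightarrow> (\<forall>i\<in>S. pv (q i)) \<Longrightarrow>
     (\<Sum>i\<in>S. w i * G (q i)) \<le> G (\<lambda>x. \<Sum>i\<in>S. w i * q i x)"
  using assms
proof (induction S arbitrary: w rule: finite_ne_induct)
  case (singleton j)
  then show ?case by simp
next
  case (insert j S)
  define s where "s = sum w S"
  have s0: "0 \<le> s" unfolding s_def using insert by (auto intro: sum_nonneg)
  have wj: "w j = 1 - s" using insert unfolding s_def by simp
  show ?case
  proof (cases "s = 0")
    case True
    hence z: "\<forall>i\<in>S. w i = 0" using insert sum_nonneg_eq_0_iff[of S w] unfolding s_def by auto
    have "(\<Sum>i\<in>insert j S. w i * G (q i)) = G (q j)" using insert z wj True by simp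
    moreover have "G (\<lambda>x. \<Sum>i\<in>insert j S. w i * q i x) = G (q j)"
      using insert z wj True by simp
    ultimately show ?thesis by simp
  next
    case False
    hence sp: "s > 0" using s0 by simp
    define w' where "w' i = w i / s" for i
    have w'0: "\<forall>i\<in>S. 0 \<le> w' i" using insert sp unfolding w'_def by auto
    have w'1: "sum w' S = 1" unfolding w'_def using sp s_def by (simp add: sum_divide_distrib[symmetric])
    have IH: "(\<Sum>i\<in>S. w' i * G (q i)) \<le> G (\<lambda>x. \<Sum>i\<in>S. w' i * q i x)"
      using insert.IH[OF w'0 w'1] insert by auto
    have pa: "pv (\<lambda>x. \<Sum>i\<in>S. w' i * q i x)"
      using pv_comb[of S w' q] insert w'0 w'1 by auto
    have t0: "0 \<le> w j" "w j \<le> 1" using insert s0 wj by auto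
    have C: "w j * G (q j) + (1 - w j) * G (\<lambda>x. \<Sum>i\<in>S. w' i * q i x)
       \<le> G (\<lambda>x. w j * q j x + (1 - w j) * (\<Sum>i\<in>S. w' i * q i x))"
      using concave_G[OF _ pa t0] insert by auto
    have e1: "(\<lambda>x. w j * q j x + (1 - w j) * (\<Sum>i\<in>S. w' i * q i x)) = (\<lambda>x. \<Sum>i\<in>insert j S. w i * q i x)"
    proof (rule ext)
      fix x
      have "(1 - w j) * (\<Sum>i\<in>S. w' i * q i x) = (\<Sum>i\<in>S. w i * q i x)"
        using sp wj by (simp add: w'_def sum_distrib_left)
      thus "w j * q j x + (1 - w j) * (\<Sum>i\<in>S. w' i * q i x) = (\<Sum>i\<in>insert j S. w i * q i x)"
        using insert by simp
    qed
    have e2: "(\<Sum>i\<in>insert j S. w i * G (q i)) = w j * G (q j) + s * (\<Sum>i\<in>S. w' i * G (q i))"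
      using insert sp unfolding w'_def by (auto simp: sum_distrib_left)
    have "s * (\<Sum>i\<in>S. w' i * G (q i)) \<le> s * G (\<lambda>x. \<Sum>i\<in>S. w' i * q i x)"
      using IH sp by simp
    thus ?thesis using C e1 e2 wj by simp
  qed
qed


lemma jensen_inf:
  fixes w :: "'i \<Rightarrow> real" and q :: "'i \<Rightarrow> 'x \<Rightarrow> real"
  assumes w0: "\<And>i. i \<in> I \<Longrightarrow> 0 \<le> w i" and hw: "(w has_sum 1) I"
    and pq: "\<And>i. i \<in> I \<Longrightarrow> pv (q i)"
    and hp: "\<And>x. x \<in> set xs \<Longrightarrow> ((\<lambda>i. w i * q i x) has_sum p x) I"
  shows "(\<lambda>i. w i * G (q i)) summable_on I \<and> infsum (\<lambda>i. w i * G (q i)) I \<le> G p"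
proof -
  have qnn: "\<And>i x. i \<in> I \<Longrightarrow> x \<in> set xs \<Longrightarrow> 0 \<le> w i * q i x"
    using w0 pq unfolding pv_def by auto
  have pvp: "pv p"
  proof -
    have "((\<lambda>i. \<Sum>x\<in>set xs. w i * q i x) has_sum (\<Sum>x\<in>set xs. p x)) I"
      by (rule has_sum_sum_fin) (use hp in auto)
    moreover have "((\<lambda>i. \<Sum>x\<in>set xs. w i * q i x) has_sum 1) I"
    proof -
      have "((\<lambda>i. \<Sum>x\<in>set xs. w i * q i x) has_sum 1) I \<longleftrightarrow> (w has_sum 1) I"
        by (rule has_sum_cong) (use pq in \<open>auto simp: pv_def sum_distrib_left[symmetric]\<close>)
      thus ?thesis using hw by simp
    qed
    ultimately have "(\<Sum>x\<in>set xs. p x) = 1" using has_sum_unique by blast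
    moreover have "\<forall>x\<in>set xs. 0 \<le> p x" using hp qnn has_sum_nonneg by blast
    ultimately show ?thesis unfolding pv_def by simp
  qed
  have B0: "0 \<le> B" using bound_G[OF pvp] by simp
  have sw: "w summable_on I" using hw summable_on_def by blast
  have "(\<lambda>i. norm (w i * G (q i))) summable_on I"
  proof (rule summable_on_comparison_test[of "\<lambda>i. B * w i"])
    show "(\<lambda>i. B * w i) summable_on I" using sw by (rule summable_on_cmult_right)
    fix i assume i: "i \<in> I"
    have "\<bar>G (q i)\<bar> \<le> B" using bound_G pq i by blast
    hence "w i * \<bar>G (q i)\<bar> \<le> w i * B" using w0 i by (intro mult_left_mono) auto
    thus "norm (w i * G (q i)) \<le> B * w i" using w0 i by (simp add: abs_mult mult.commute)
  qed simp
  hence sum1: "(\<lambda>i. w i * G (q i)) summable_on I" by (rule abs_summable_summable)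
  have key: "(\<Sum>i\<in>S. w i * G (q i)) - (1 - sum w S) * B \<le> G p" if S: "finite S" "S \<subseteq> I" for S
  proof -
    define s where "s = sum w S"
    have tw: "(w has_sum (1 - s)) (I - S)" unfolding s_def
      by (rule has_sum_Diff[OF hw has_sum_finite[OF S(1)] S(2)])
    have s1: "s \<le> 1" using has_sum_nonneg[OF tw] w0 by auto
    have s0: "0 \<le> s" unfolding s_def using w0 S by (auto intro: sum_nonneg)
    define r where "r x = p x - (\<Sum>i\<in>S. w i * q i x)" for x
    have r0: "0 \<le> r x" if x: "x \<in> set xs" for x
    proof -
      have "((\<lambda>i. w i * q i x) has_sum r x) (I - S)" unfolding r_def
        by (rule has_sum_Diff[OF hp[OF x] has_sum_finite[OF S(1)] S(2)])
      thus ?thesis using has_sum_nonneg qnn x by blast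
    qed
    have rs: "(\<Sum>x\<in>set xs. r x) = 1 - s"
    proof -
      have "(\<Sum>x\<in>set xs. \<Sum>i\<in>S. w i * q i x) = (\<Sum>i\<in>S. w i * (\<Sum>x\<in>set xs. q i x))"
        by (subst sum.swap) (simp add: sum_distrib_left)
      also have "\<dots> = s" unfolding s_def using pq S by (auto simp: pv_def intro!: sum.cong)
      finally show ?thesis using pvp unfolding r_def pv_def by (simp add: sum_subtractf)
    qed
    define qn where "qn = (if s < 1 then (\<lambda>x. r x / (1 - s)) else p)"
    have pqn: "pv qn"
    proof (cases "s < 1")
      case True
      then show ?thesis using r0 rs unfolding qn_def pv_def by (simp add: sum_divide_distrib[symmetric])
    qed (use pvp qn_def in simp)
    have comb: "(1 - s) * qn x + (\<Sum>i\<in>S. w i * q i x) = p x" if x: "x \<in> set xs" for x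
    proof (cases "s < 1")
      case True
      then show ?thesis unfolding qn_def r_def by simp
    next
      case False
      hence sE: "s = 1" using s1 by simp
      hence "\<forall>x\<in>set xs. r x = 0" using rs r0 sum_nonneg_eq_0_iff[of "set xs" r] by simp
      hence "r x = 0" using x by blast
      then show ?thesis using False sE unfolding qn_def r_def by simp
    qed
    define T where "T = insert None (Some ` S)"
    define w' where "w' = case_option (1 - s) w"
    define q' where "q' = case_option qn q"
    have sT: "\<And>f. sum f T = f None + sum (\<lambda>i. f (Some i)) S"
      unfolding T_def using S(1) by (simp add: sum.reindex)
    have J: "(\<Sum>i\<in>T. w' i * G (q' i)) \<le> G (\<lambda>x. \<Sum>i\<in>T. w' i * q' i x)"
    proof (rule jensen_fin)
      show "finite T" "T \<noteq> {}" unfolding T_def using S by auto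
      show "\<forall>i\<in>T. 0 \<le> w' i" unfolding T_def w'_def using s1 w0 S by auto
      show "sum w' T = 1" unfolding sT w'_def s_def by simp
      show "\<forall>i\<in>T. pv (q' i)" unfolding T_def q'_def using pqn pq S by auto
    qed
    have "G (\<lambda>x. \<Sum>i\<in>T. w' i * q' i x) = G p"
      by (rule G_cong) (simp add: sT w'_def q'_def comb)
    moreover have "(\<Sum>i\<in>T. w' i * G (q' i)) = (1 - s) * G qn + (\<Sum>i\<in>S. w i * G (q i))"
      by (simp add: sT w'_def q'_def)
    moreover have "- ((1 - s) * B) \<le> (1 - s) * G qn"
    proof -
      have "(1 - s) * (- B) \<le> (1 - s) * G qn"
        using bound_G[OF pqn] s1 by (intro mult_left_mono) auto
      thus ?thesis by simp
    qed
    ultimately show ?thesis using J unfolding s_def[symmetric] by linarith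
  qed
  define \<Phi> where "\<Phi> = infsum (\<lambda>i. w i * G (q i)) I"
  have h\<Phi>: "((\<lambda>i. w i * G (q i)) has_sum \<Phi>) I" unfolding \<Phi>_def using sum1 by simp
  have "\<Phi> \<le> G p"
  proof (rule field_le_epsilon)
    fix e :: real assume e: "0 < e"
    define \<epsilon> where "\<epsilon> = e / (B + 1)"
    have \<epsilon>0: "0 < \<epsilon>" unfolding \<epsilon>_def using e B0 by simp
    have ev1: "eventually (\<lambda>S. dist (sum (\<lambda>i. w i * G (q i)) S) \<Phi> < \<epsilon>) (finite_subsets_at_top I)"
      using h\<Phi> \<epsilon>0 unfolding has_sum_def tendsto_iff by blast
    have ev2: "eventually (\<lambda>S. dist (sum w S) 1 < \<epsilon>) (finite_subsets_at_top I)"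
      using hw \<epsilon>0 unfolding has_sum_def tendsto_iff by blast
    obtain S where S: "finite S" "S \<subseteq> I" "dist (sum (\<lambda>i. w i * G (q i)) S) \<Phi> < \<epsilon>"
        "dist (sum w S) 1 < \<epsilon>"
      using eventually_conj[OF ev1 ev2] unfolding eventually_finite_subsets_at_top by blast
    have k: "(\<Sum>i\<in>S. w i * G (q i)) - (1 - sum w S) * B \<le> G p" using key S by blast
    have a1: "\<Phi> \<le> (\<Sum>i\<in>S. w i * G (q i)) + \<epsilon>" using S(3) by (simp add: dist_real_def)
    have "(1 - sum w S) * B \<le> \<epsilon> * B" using S(4) B0 by (intro mult_right_mono) (auto simp: dist_real_def)
    moreover have "\<epsilon> * B + \<epsilon> = e"
    proof -
      have "\<epsilon> * B + \<epsilon> = \<epsilon> * (B + 1)" by (simp add: algebra_simps)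
      also have "\<dots> = e" unfolding \<epsilon>_def using B0 by simp
      finally show ?thesis .
    qed
    ultimately show "\<Phi> \<le> G p + e" using a1 k by linarith
  qed
  thus ?thesis using sum1 \<Phi>_def by simp
qed


end

lemma pmf_has_sum_prob: "(pmf \<mu> has_sum measure_pmf.prob \<mu> A) A"
proof -
  have a: "Infinite_Set_Sum.abs_summable_on (pmf \<mu>) A" by (rule pmf_abs_summable)
  hence "(\<lambda>x. norm (pmf \<mu> x)) summable_on A" using abs_summable_equivalent by blast
  hence "pmf \<mu> summable_on A" by (rule abs_summable_summable)
  moreover have "infsum (pmf \<mu>) A = measure_pmf.prob \<mu> A"
    by (simp add: measure_pmf_conv_infsetsum infsetsum_infsum[OF a])
  ultimately show ?thesis by (metis has_sum_infsum)
qed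

lemma marg: "((\<lambda>y. Pr \<mu> (A \<inter> Y -` {y})) has_sum Pr \<mu> A) UNIV"
proof -
  let ?f = "\<lambda>p. pmf \<mu> (snd p)"
  have bij: "bij_betw (\<lambda>\<omega>. (Y \<omega>, \<omega>)) A (Sigma UNIV (\<lambda>y. A \<inter> Y -` {y}))"
    by (rule bij_betwI[of _ _ _ snd]) auto
  have "((\<lambda>\<omega>. ?f (Y \<omega>, \<omega>)) has_sum Pr \<mu> A) A"
    using pmf_has_sum_prob[of \<mu> A] unfolding Pr_def by simp
  hence "(?f has_sum Pr \<mu> A) (Sigma UNIV (\<lambda>y. A \<inter> Y -` {y}))"
    using has_sum_reindex_bij_betw[OF bij, of ?f] by blast
  moreover have "((\<lambda>\<omega>. ?f (y, \<omega>)) has_sum Pr \<mu> (A \<inter> Y -` {y})) (A \<inter> Y -` {y})" for y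
    using pmf_has_sum_prob[of \<mu> "A \<inter> Y -` {y}"] unfolding Pr_def by simp
  ultimately show ?thesis
    by (rule has_sum_SigmaD)
qed

lemma Pr_nonneg: "0 \<le> Pr \<mu> A" unfolding Pr_def by simp

lemma Pr_mono: "A \<subseteq> B \<Longrightarrow> Pr \<mu> A \<le> Pr \<mu> B"
  unfolding Pr_def by (simp add: measure_pmf.finite_measure_mono)

lemma marg_pos: "((\<lambda>y. Pr \<mu> (A \<inter> Y -` {y})) has_sum Pr \<mu> A) {y. Pr \<mu> (Y -` {y}) > 0}"
proof -
  have "((\<lambda>y. Pr \<mu> (A \<inter> Y -` {y})) has_sum Pr \<mu> A) UNIV \<longleftrightarrow>
        ((\<lambda>y. Pr \<mu> (A \<inter> Y -` {y})) has_sum Pr \<mu> A) {y. Pr \<mu> (Y -` {y}) > 0}"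
  proof (rule has_sum_cong_neutral)
    fix y assume "y \<in> UNIV - {y. Pr \<mu> (Y -` {y}) > 0}"
    hence "Pr \<mu> (Y -` {y}) \<le> 0" by simp
    moreover have "Pr \<mu> (A \<inter> Y -` {y}) \<le> Pr \<mu> (Y -` {y})" by (rule Pr_mono) auto
    ultimately show "Pr \<mu> (A \<inter> Y -` {y}) = 0" using Pr_nonneg[of \<mu>] by (meson order.antisym order.trans)
  qed auto
  thus ?thesis using marg by blast
qed

lemma marg_fin:
  assumes "finite (range X)"
  shows "(\<Sum>x\<in>range X. Pr \<mu> (A \<inter> X -` {x})) = Pr \<mu> A"
proof -
  have "((\<lambda>x. Pr \<mu> (A \<inter> X -` {x})) has_sum Pr \<mu> A) UNIV \<longleftrightarrow>
        ((\<lambda>x. Pr \<mu> (A \<inter> X -` {x})) has_sum Pr \<mu> A) (range X)"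
  proof (rule has_sum_cong_neutral)
    fix x assume "x \<in> UNIV - range X"
    hence "A \<inter> X -` {x} = {}" by blast
    thus "Pr \<mu> (A \<inter> X -` {x}) = 0" by (simp add: Pr_def)
  qed simp_all
  hence "((\<lambda>x. Pr \<mu> (A \<inter> X -` {x})) has_sum Pr \<mu> A) (range X)" using marg by blast
  moreover have "((\<lambda>x. Pr \<mu> (A \<inter> X -` {x})) has_sum (\<Sum>x\<in>range X. Pr \<mu> (A \<inter> X -` {x}))) (range X)"
    by (rule has_sum_finite[OF assms])
  ultimately show ?thesis using has_sum_unique by blast
qed

lemma Pr_UNIV: "Pr \<mu> UNIV = 1"
  unfolding Pr_def by simp



context jens begin
lemma pv_post:
  assumes xs: "set xs = range X" and pos: "Pr \<mu> (V -` {v}) > 0"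
  shows "pv (\<lambda>x. Pr \<mu> (X -` {x} \<inter> V -` {v}) / Pr \<mu> (V -` {v}))"
proof -
  have fin: "finite (range X)" using xs by (metis List.finite_set)
  have "(\<Sum>x\<in>range X. Pr \<mu> (V -` {v} \<inter> X -` {x})) = Pr \<mu> (V -` {v})"
    by (rule marg_fin[OF fin])
  hence "(\<Sum>x\<in>set xs. Pr \<mu> (X -` {x} \<inter> V -` {v})) = Pr \<mu> (V -` {v})"
    unfolding xs by (simp only: Int_commute)
  thus ?thesis unfolding pv_def using pos
    by (auto simp: sum_divide_distrib[symmetric] Pr_nonneg)
qed
end


context jens begin
lemma part_a:
  assumes xs: "enum_of (range X) = xs" "set xs = range X"
  shows "(\<lambda>y. Pr \<mu> (Y -` {y}) * F (post_vec \<mu> X Y y)) summable_on {y. Pr \<mu> (Y -` {y}) > 0}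
     \<and> infsum (\<lambda>y. Pr \<mu> (Y -` {y}) * F (post_vec \<mu> X Y y)) {y. Pr \<mu> (Y -` {y}) > 0}
        \<le> F (distr_vec \<mu> X)"
proof -
  define I where "I = {y. Pr \<mu> (Y -` {y}) > 0}"
  define q where "q y x = Pr \<mu> (X -` {x} \<inter> Y -` {y}) / Pr \<mu> (Y -` {y})" for y x
  have post: "F (post_vec \<mu> X Y y) = G (q y)" for y
    unfolding post_vec_def q_def xs(1) G_def ..
  have distr: "F (distr_vec \<mu> X) = G (\<lambda>x. Pr \<mu> (X -` {x}))"
    unfolding distr_vec_def xs(1) G_def ..
  have J: "(\<lambda>y. Pr \<mu> (Y -` {y}) * G (q y)) summable_on I \<and>
      infsum (\<lambda>y. Pr \<mu> (Y -` {y}) * G (q y)) I \<le> G (\<lambda>x. Pr \<mu> (X -` {x}))"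
  proof (rule jensen_inf)
    show "0 \<le> Pr \<mu> (Y -` {i})" for i by (rule Pr_nonneg)
    show "((\<lambda>y. Pr \<mu> (Y -` {y})) has_sum 1) I"
      using marg_pos[of \<mu> UNIV Y] unfolding I_def by (simp add: Pr_UNIV)
    show "pv (q i)" if "i \<in> I" for i using pv_post[OF xs(2), of \<mu> Y i] that unfolding I_def q_def by simp
    fix x
    have "((\<lambda>y. Pr \<mu> (Y -` {y}) * q y x) has_sum Pr \<mu> (X -` {x})) I \<longleftrightarrow>
          ((\<lambda>y. Pr \<mu> (X -` {x} \<inter> Y -` {y})) has_sum Pr \<mu> (X -` {x})) I"
      by (rule has_sum_cong) (simp add: I_def q_def)
    thus "((\<lambda>y. Pr \<mu> (Y -` {y}) * q y x) has_sum Pr \<mu> (X -` {x})) I"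
      using marg_pos unfolding I_def by blast
  qed
  thus ?thesis unfolding post distr I_def .
qed

end


context jens begin

lemma part_b:
  assumes xs: "enum_of (range X) = xs" "set xs = range X"
    and ci: "cond_indep \<nu> X Y Z"
  shows "infsum (\<lambda>y. Pr \<nu> (Y -` {y}) * F (post_vec \<nu> X Y y)) {y. Pr \<nu> (Y -` {y}) > 0}
     \<le> infsum (\<lambda>z. Pr \<nu> (Z -` {z}) * F (post_vec \<nu> X Z z)) {z. Pr \<nu> (Z -` {z}) > 0}"
proof -
  define Iy where "Iy = {y. Pr \<nu> (Y -` {y}) > 0}"
  define Iz where "Iz = {z. Pr \<nu> (Z -` {z}) > 0}"
  define q where "q y x = Pr \<nu> (X -` {x} \<inter> Y -` {y}) / Pr \<nu> (Y -` {y})" for y x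
  define qz where "qz z x = Pr \<nu> (X -` {x} \<inter> Z -` {z}) / Pr \<nu> (Z -` {z})" for z x
  define v where "v z y = Pr \<nu> (Y -` {y} \<inter> Z -` {z}) / Pr \<nu> (Z -` {z})" for z y
  define \<psi> where "\<psi> z = infsum (\<lambda>y. v z y * G (q y)) Iy" for z
  have post: "F (post_vec \<nu> X Y y) = G (q y)" for y
    unfolding post_vec_def q_def xs(1) G_def ..
  have postz: "F (post_vec \<nu> X Z z) = G (qz z)" for z
    unfolding post_vec_def qz_def xs(1) G_def ..
  have pq: "pv (q y)" if "y \<in> Iy" for y
    using pv_post[OF xs(2), of \<nu> Y y] that unfolding Iy_def q_def by simp
  have Jz: "(\<lambda>y. v z y * G (q y)) summable_on Iy \<and> \<psi> z \<le> G (qz z)" if z: "z \<in> Iz" for z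
    unfolding \<psi>_def
  proof (rule jensen_inf)
    have pz: "Pr \<nu> (Z -` {z}) > 0" using z Iz_def by simp
    show "0 \<le> v z i" for i unfolding v_def by (simp add: Pr_nonneg)
    have "((\<lambda>y. Pr \<nu> (Z -` {z} \<inter> Y -` {y}) / Pr \<nu> (Z -` {z})) has_sum
           Pr \<nu> (Z -` {z}) / Pr \<nu> (Z -` {z})) Iy"
      unfolding Iy_def by (rule has_sum_divide_const) (rule marg_pos)
    thus "(v z has_sum 1) Iy" using pz unfolding v_def by (simp add: Int_commute)
    show "pv (q i)" if "i \<in> Iy" for i using pq that by blast
    fix x
    have "((\<lambda>y. Pr \<nu> ((X -` {x} \<inter> Z -` {z}) \<inter> Y -` {y}) / Pr \<nu> (Z -` {z})) has_sum
           Pr \<nu> (X -` {x} \<inter> Z -` {z}) / Pr \<nu> (Z -` {z})) Iy"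
      unfolding Iy_def by (rule has_sum_divide_const) (rule marg_pos)
    moreover have "v z y * q y x = Pr \<nu> ((X -` {x} \<inter> Z -` {z}) \<inter> Y -` {y}) / Pr \<nu> (Z -` {z})"
      if y: "y \<in> Iy" for y
    proof -
      have py: "Pr \<nu> (Y -` {y}) > 0" using y Iy_def by simp
      have e: "(X -` {x} \<inter> Z -` {z}) \<inter> Y -` {y} = X -` {x} \<inter> Y -` {y} \<inter> Z -` {z}" by blast
      have c: "Pr \<nu> (X -` {x} \<inter> Y -` {y} \<inter> Z -` {z}) * Pr \<nu> (Y -` {y}) =
          Pr \<nu> (X -` {x} \<inter> Y -` {y}) * Pr \<nu> (Y -` {y} \<inter> Z -` {z})"
        using ci unfolding cond_indep_def by blast
      show ?thesis unfolding e v_def q_def using py pz c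
        by (simp add: field_simps)
    qed
    ultimately show "((\<lambda>y. v z y * q y x) has_sum qz z x) Iy"
      unfolding qz_def by (subst has_sum_cong) auto
  qed
  define h where "h = (\<lambda>(z, y). G (q y) * Pr \<nu> (Y -` {y} \<inter> Z -` {z}))"
  have B0: "0 \<le> B" using bnd[of "[1]"] by (simp add: prob_vec_def)
  have pyz: "(\<lambda>p. Pr \<nu> (UNIV \<inter> (\<lambda>\<omega>. (Z \<omega>, Y \<omega>)) -` {p})) = (\<lambda>(z,y). Pr \<nu> (Y -` {y} \<inter> Z -` {z}))"
  proof (rule ext, clarify)
    fix z y
    have "UNIV \<inter> (\<lambda>\<omega>. (Z \<omega>, Y \<omega>)) -` {(z,y)} = Y -` {y} \<inter> Z -` {z}" by auto
    thus "Pr \<nu> (UNIV \<inter> (\<lambda>\<omega>. (Z \<omega>, Y \<omega>)) -` {(z,y)}) = Pr \<nu> (Y -` {y} \<inter> Z -` {z})" by simp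
  qed
  have "(\<lambda>(z,y). Pr \<nu> (Y -` {y} \<inter> Z -` {z})) summable_on UNIV"
    using marg[of \<nu> UNIV "\<lambda>\<omega>. (Z \<omega>, Y \<omega>)"] unfolding pyz summable_on_def by blast
  hence base: "(\<lambda>(z,y). Pr \<nu> (Y -` {y} \<inter> Z -` {z})) summable_on Iz \<times> Iy"
    by (rule summable_on_subset_banach) simp
  have "(\<lambda>p. norm (h p)) summable_on Iz \<times> Iy"
  proof (rule summable_on_comparison_test[of "\<lambda>p. B * (case p of (z,y) \<Rightarrow> Pr \<nu> (Y -` {y} \<inter> Z -` {z}))"])
    show "(\<lambda>p. B * (case p of (z,y) \<Rightarrow> Pr \<nu> (Y -` {y} \<inter> Z -` {z}))) summable_on Iz \<times> Iy"
      using base by (rule summable_on_cmult_right)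
    fix p assume p: "p \<in> Iz \<times> Iy"
    then obtain z y where zy: "p = (z,y)" "y \<in> Iy" by auto
    have "\<bar>G (q y)\<bar> \<le> B" using bound_G pq zy by blast
    hence "\<bar>G (q y)\<bar> * Pr \<nu> (Y -` {y} \<inter> Z -` {z}) \<le> B * Pr \<nu> (Y -` {y} \<inter> Z -` {z})"
      by (intro mult_right_mono) (auto simp: Pr_nonneg)
    thus "norm (h p) \<le> B * (case p of (z,y) \<Rightarrow> Pr \<nu> (Y -` {y} \<inter> Z -` {z}))"
      unfolding zy h_def by (simp add: abs_mult Pr_nonneg)
  qed simp
  hence hs: "h summable_on Iz \<times> Iy" by (rule abs_summable_summable)
  define S where "S = infsum h (Iz \<times> Iy)"
  have hS: "(h has_sum S) (Iz \<times> Iy)" unfolding S_def using hs by simp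
  have s1: "((\<lambda>z. h (z, y)) has_sum G (q y) * Pr \<nu> (Y -` {y})) Iz" if "y \<in> Iy" for y
    unfolding h_def Iz_def by (simp, rule has_sum_cmult_right, rule marg_pos)
  have s2: "((\<lambda>y. h (z, y)) has_sum Pr \<nu> (Z -` {z}) * \<psi> z) Iy" if z: "z \<in> Iz" for z
  proof -
    have pz: "Pr \<nu> (Z -` {z}) > 0" using z Iz_def by simp
    have "((\<lambda>y. v z y * G (q y)) has_sum \<psi> z) Iy" using Jz[OF z] \<psi>_def by simp
    hence "((\<lambda>y. Pr \<nu> (Z -` {z}) * (v z y * G (q y))) has_sum Pr \<nu> (Z -` {z}) * \<psi> z) Iy"
      by (rule has_sum_cmult_right)
    moreover have "Pr \<nu> (Z -` {z}) * (v z y * G (q y)) = h (z, y)" for y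
      unfolding h_def v_def using pz by simp
    ultimately show ?thesis by simp
  qed
  have A1: "((\<lambda>z. Pr \<nu> (Z -` {z}) * \<psi> z) has_sum S) Iz"
    using hS s2 by (rule has_sum_SigmaD)
  have "((\<lambda>(y,z). h (z,y)) has_sum S) (Iy \<times> Iz)" using hS has_sum_swap by blast
  hence A2: "((\<lambda>y. G (q y) * Pr \<nu> (Y -` {y})) has_sum S) Iy"
    by (rule has_sum_SigmaD) (use s1 in simp)
  have L: "infsum (\<lambda>y. Pr \<nu> (Y -` {y}) * F (post_vec \<nu> X Y y)) Iy = S"
    unfolding post using A2 by (simp add: mult.commute infsumI)
  have R1: "(\<lambda>z. Pr \<nu> (Z -` {z}) * F (post_vec \<nu> X Z z)) summable_on Iz"
    using part_a[OF xs, of \<nu> Z] unfolding Iz_def by blast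
  have "S \<le> infsum (\<lambda>z. Pr \<nu> (Z -` {z}) * F (post_vec \<nu> X Z z)) Iz"
  proof -
    have "S = infsum (\<lambda>z. Pr \<nu> (Z -` {z}) * \<psi> z) Iz" using A1 by (simp add: infsumI)
    also have "\<dots> \<le> infsum (\<lambda>z. Pr \<nu> (Z -` {z}) * F (post_vec \<nu> X Z z)) Iz"
    proof (rule infsum_mono)
      show "(\<lambda>z. Pr \<nu> (Z -` {z}) * \<psi> z) summable_on Iz" using A1 summable_on_def by blast
      show "(\<lambda>z. Pr \<nu> (Z -` {z}) * F (post_vec \<nu> X Z z)) summable_on Iz" by (rule R1)
      fix z assume "z \<in> Iz"
      thus "Pr \<nu> (Z -` {z}) * \<psi> z \<le> Pr \<nu> (Z -` {z}) * F (post_vec \<nu> X Z z)"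
        unfolding postz using Jz by (intro mult_left_mono) (auto simp: Pr_nonneg)
    qed
    finally show ?thesis .
  qed
  thus ?thesis using L unfolding Iy_def Iz_def by simp
qed

end


lemma neg_concave: "convex_F F \<Longrightarrow> concave_F (\<lambda>p. - F p)"
  unfolding convex_F_def concave_F_def
proof (intro allI impI)
  fix p q and t :: real
  assume c: "\<forall>p q t. prob_vec p \<longrightarrow> prob_vec q \<longrightarrow> length p = length q \<longrightarrow> 0 \<le> t \<longrightarrow> t \<le> 1 \<longrightarrow>
       F (mix_vec t p q) \<le> t * F p + (1 - t) * F q"
    and h: "prob_vec p" "prob_vec q" "length p = length q" "0 \<le> t" "t \<le> 1"
  have "F (mix_vec t p q) \<le> t * F p + (1 - t) * F q" using c h by blast
  thus "t * - F p + (1 - t) * - F q \<le> - F (mix_vec t p q)" by linarith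
qed

lemma enum_of_props:
  assumes "finite A"
  shows "distinct (enum_of A) \<and> set (enum_of A) = A"
  unfolding enum_of_def by (rule someI_ex) (use finite_distinct_list[OF assms] in blast)

theorem proposition2:
  fixes \<eta> :: "real \<Rightarrow> real" and F :: "real list \<Rightarrow> real"
  assumes "gen_entropy \<eta> F"
  shows "(\<forall>(\<mu> :: 'w pmf) (X :: 'w \<Rightarrow> 'x) (Y :: 'w \<Rightarrow> 'y).
            finite (range X) \<longrightarrow> gH \<eta> F \<mu> X - gHc \<eta> F \<mu> X Y \<ge> 0)
       \<and> (\<forall>(\<nu> :: 'v pmf) (X :: 'v \<Rightarrow> 'a) (Y :: 'v \<Rightarrow> 'b) (Z :: 'v \<Rightarrow> 'c).
            finite (range X) \<longrightarrow> cond_indep \<nu> X Y Z \<longrightarrow> gHc \<eta> F \<nu> X Z \<ge> gHc \<eta> F \<nu> X Y)"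
proof -
  obtain B where bnd: "\<And>p. prob_vec p \<Longrightarrow> \<bar>F p\<bar> \<le> B"
    and cs: "(mono \<eta> \<and> concave_F F) \<or> (antimono \<eta> \<and> convex_F F)"
    using assms unfolding gen_entropy_def by blast
  have bndn: "\<And>p. prob_vec p \<Longrightarrow> \<bar>- F p\<bar> \<le> B" using bnd by simp
  have A: "gH \<eta> F \<mu> X - gHc \<eta> F \<mu> X Y \<ge> 0" if fin: "finite (range X)"
    for \<mu> :: "'w pmf" and X :: "'w \<Rightarrow> 'x" and Y :: "'w \<Rightarrow> 'y"
  proof -
    have ep: "distinct (enum_of (range X))" "set (enum_of (range X)) = range X"
      using enum_of_props[OF fin] by auto
    define I where "I = {y. Pr \<mu> (Y -` {y}) > 0}"
    show ?thesis
    proof (cases "mono \<eta> \<and> concave_F F")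
      case True
      interpret J: jens F "enum_of (range X)" B
        by unfold_locales (use ep True bnd in auto)
      have "infsum (\<lambda>y. Pr \<mu> (Y -` {y}) * F (post_vec \<mu> X Y y)) I \<le> F (distr_vec \<mu> X)"
        using J.part_a[OF refl ep(2), of \<mu> Y] unfolding I_def by blast
      hence "\<eta> (infsum (\<lambda>y. Pr \<mu> (Y -` {y}) * F (post_vec \<mu> X Y y)) I) \<le> \<eta> (F (distr_vec \<mu> X))"
        using True by (simp add: monoD)
      thus ?thesis unfolding gH_def gHc_def I_def by simp
    next
      case False
      hence an: "antimono \<eta>" and cv: "convex_F F" using cs by auto
      interpret J: jens "\<lambda>p. - F p" "enum_of (range X)" B
        by unfold_locales (use ep neg_concave[OF cv] bndn in auto)
      have "infsum (\<lambda>y. Pr \<mu> (Y -` {y}) * - F (post_vec \<mu> X Y y)) I \<le> - F (distr_vec \<mu> X)"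
        using J.part_a[OF refl ep(2), of \<mu> Y] unfolding I_def by blast
      moreover have "infsum (\<lambda>y. Pr \<mu> (Y -` {y}) * - F (post_vec \<mu> X Y y)) I
          = - infsum (\<lambda>y. Pr \<mu> (Y -` {y}) * F (post_vec \<mu> X Y y)) I"
        using infsum_uminus[of "\<lambda>y. Pr \<mu> (Y -` {y}) * F (post_vec \<mu> X Y y)" I] by simp
      ultimately have "F (distr_vec \<mu> X) \<le> infsum (\<lambda>y. Pr \<mu> (Y -` {y}) * F (post_vec \<mu> X Y y)) I"
        by linarith
      hence "\<eta> (infsum (\<lambda>y. Pr \<mu> (Y -` {y}) * F (post_vec \<mu> X Y y)) I) \<le> \<eta> (F (distr_vec \<mu> X))"
        using an by (simp add: antimonoD)
      thus ?thesis unfolding gH_def gHc_def I_def by simp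
    qed
  qed
  have Bp: "gHc \<eta> F \<nu> X Z \<ge> gHc \<eta> F \<nu> X Y" if fin: "finite (range X)" and ci: "cond_indep \<nu> X Y Z"
    for \<nu> :: "'v pmf" and X :: "'v \<Rightarrow> 'a" and Y :: "'v \<Rightarrow> 'b" and Z :: "'v \<Rightarrow> 'c"
  proof -
    have ep: "distinct (enum_of (range X))" "set (enum_of (range X)) = range X"
      using enum_of_props[OF fin] by auto
    define Iy where "Iy = {y. Pr \<nu> (Y -` {y}) > 0}"
    define Iz where "Iz = {z. Pr \<nu> (Z -` {z}) > 0}"
    show ?thesis
    proof (cases "mono \<eta> \<and> concave_F F")
      case True
      interpret J: jens F "enum_of (range X)" B
        by unfold_locales (use ep True bnd in auto)
      have "infsum (\<lambda>y. Pr \<nu> (Y -` {y}) * F (post_vec \<nu> X Y y)) Iy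
          \<le> infsum (\<lambda>z. Pr \<nu> (Z -` {z}) * F (post_vec \<nu> X Z z)) Iz"
        using J.part_b[OF refl ep(2) ci] unfolding Iy_def Iz_def by blast
      hence "\<eta> (infsum (\<lambda>y. Pr \<nu> (Y -` {y}) * F (post_vec \<nu> X Y y)) Iy)
          \<le> \<eta> (infsum (\<lambda>z. Pr \<nu> (Z -` {z}) * F (post_vec \<nu> X Z z)) Iz)"
        using True by (simp add: monoD)
      thus ?thesis unfolding gHc_def Iy_def Iz_def by simp
    next
      case False
      hence an: "antimono \<eta>" and cv: "convex_F F" using cs by auto
      interpret J: jens "\<lambda>p. - F p" "enum_of (range X)" B
        by unfold_locales (use ep neg_concave[OF cv] bndn in auto)
      have "infsum (\<lambda>y. Pr \<nu> (Y -` {y}) * - F (post_vec \<nu> X Y y)) Iy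
          \<le> infsum (\<lambda>z. Pr \<nu> (Z -` {z}) * - F (post_vec \<nu> X Z z)) Iz"
        using J.part_b[OF refl ep(2) ci] unfolding Iy_def Iz_def by blast
      moreover have "infsum (\<lambda>y. Pr \<nu> (Y -` {y}) * - F (post_vec \<nu> X Y y)) Iy
          = - infsum (\<lambda>y. Pr \<nu> (Y -` {y}) * F (post_vec \<nu> X Y y)) Iy"
        using infsum_uminus[of "\<lambda>y. Pr \<nu> (Y -` {y}) * F (post_vec \<nu> X Y y)" Iy] by simp
      moreover have "infsum (\<lambda>z. Pr \<nu> (Z -` {z}) * - F (post_vec \<nu> X Z z)) Iz
          = - infsum (\<lambda>z. Pr \<nu> (Z -` {z}) * F (post_vec \<nu> X Z z)) Iz"
        using infsum_uminus[of "\<lambda>z. Pr \<nu> (Z -` {z}) * F (post_vec \<nu> X Z z)" Iz] by simp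
      ultimately have "infsum (\<lambda>z. Pr \<nu> (Z -` {z}) * F (post_vec \<nu> X Z z)) Iz
          \<le> infsum (\<lambda>y. Pr \<nu> (Y -` {y}) * F (post_vec \<nu> X Y y)) Iy"
        by linarith
      hence "\<eta> (infsum (\<lambda>y. Pr \<nu> (Y -` {y}) * F (post_vec \<nu> X Y y)) Iy)
          \<le> \<eta> (infsum (\<lambda>z. Pr \<nu> (Z -` {z}) * F (post_vec \<nu> X Z z)) Iz)"
        using an by (simp add: antimonoD)
      thus ?thesis unfolding gHc_def Iy_def Iz_def by simp
    qed
  qed
  show ?thesis using A Bp by blast
qed

end
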